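(* Let $G=(V,E)$ be a finite directed graph, $e\in E$, and $\alpha,\beta\in\{+,-\}$. Then (i) $\mathbb{E}[R^\alpha(e_* )]=\bar R^\alpha(e_* )$ and $\mathbb{E}[R^\beta(e^* )]=\bar R^\beta(e^* )$; (ii) $\mathbb{E}[R^\alpha(e_* )R^\beta(e^* )]=\bar R^\alpha(e_* )\bar R^\beta(e^* )$.
   Context: For a directed graph $G=(V,E)$, $e_*$ and $e^*$ denote the source and target of edge $e$, $D^+(v)$ and $D^-(v)$ the out- and in-degree of $v$. For a finite sequence $(x_i)_{1\le i\le n}$ of reals, the rank is $R(x_j)=|\{i: x_i\ge x_j\}|$ and the average rank is $\bar R(x_j)=|\{i:x_i>x_j\}|+\frac{|\{i:x_i=x_j\}|+1}{2}$. Let $(U_f)_{f\in E}$ and $(W_f)_{f\in E}$ be i.i.d. copies of independent uniform random variables $U$ and $W$ on $(0,1)$. Define $R^\alpha(e_* )$ as the rank $R$ of $D^\alpha(e_* )+U_e$ within the sequence $(D^\alpha(f_* )+U_f)_{f\in E}$, and $R^\beta(e^* )$ as the rank of $D^\beta(e^* )+W_e$ within $(D^\beta(f^* )+W_f)_{f\in E}$. Define $\bar R^\alpha(e_* )$ as the average rank of $D^\alpha(e_* )$ within $(D^\alpha(f_* ))_{f\in E}$ and $\bar R^\beta(e^* )$ as the average rank of $D^\beta(e^* )$ within $(D^\beta(f^* ))_{f\in E}$. *)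

theory Defs
  imports "HOL-Probability.Probability"
begin

text \<open>Directions: Out corresponds to alpha = +, i.e. out-degree D^+; In to alpha = -, in-degree D^-.\<close>
datatype dir = Out | In

definition deg :: "'e set \<Rightarrow> ('e \<Rightarrow> 'v) \<Rightarrow> ('e \<Rightarrow> 'v) \<Rightarrow> dir \<Rightarrow> 'v \<Rightarrow> nat" where
  "deg E src tgt d v = (case d of
      Out \<Rightarrow> card {f \<in> E. src f = v}
    | In \<Rightarrow> card {f \<in> E. tgt f = v})"

definition rank :: "'e set \<Rightarrow> ('e \<Rightarrow> real) \<Rightarrow> 'e \<Rightarrow> real" where
  "rank A x j = real (card {i \<in> A. x i \<ge> x j})"

definition avg_rank :: "'e set \<Rightarrow> ('e \<Rightarrow> real) \<Rightarrow> 'e \<Rightarrow> real" where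
  "avg_rank A x j = real (card {i \<in> A. x i > x j}) + (real (card {i \<in> A. x i = x j}) + 1) / 2"

definition unif_family :: "'e set \<Rightarrow> ('e \<Rightarrow> real) measure" where
  "unif_family E = PiM E (\<lambda>_. uniform_measure lborel {0<..<1::real})"

end

theory Submission
  imports Defs
begin

abbreviation "UN01 \<equiv> uniform_measure lborel {0<..<1::real}"

lemma N_prob: "prob_space UN01"
  by (rule prob_space_uniform_measure) auto

lemma N_AE: "AE x in UN01. 0 < x \<and> x < 1"
  by (rule AE_uniform_measureI) auto

lemma N_point: "(\<integral>y. of_bool (y = c) \<partial>UN01) = (0::real)"
proof -
  have "(\<integral>y. of_bool (y = c) \<partial>UN01) = (\<integral>y. indicator {c} y \<partial>UN01)"
    by (intro arg_cong[where f = "integral\<^sup>L UN01"]) (auto simp: fun_eq_iff indicator_def)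
  also have "\<dots> = measure UN01 {c}" by simp
  also have "\<dots> = 0"
  proof -
    have z: "measure lborel ({0<..<1::real} \<inter> {c}) = 0"
    proof (cases "0 < c \<and> c < 1")
      case True then have "{0<..<1::real} \<inter> {c} = {c}" by auto
      then show ?thesis by simp
    next
      case False then have "{0<..<1::real} \<inter> {c} = {}" by auto
      then show ?thesis by simp
    qed
    then show ?thesis by (subst measure_uniform_measure) auto
  qed
  finally show ?thesis .
qed

lemma N_point': "(\<integral>y. of_bool (c = y) \<partial>UN01) = (0::real)"
proof -
  have "(\<lambda>y. (of_bool (c = y)::real)) = (\<lambda>y. of_bool (y = c))" by (auto simp: fun_eq_iff)
  then show ?thesis using N_point[of c] by simp
qed

lemma P_prob: "prob_space (PiM E (\<lambda>_. UN01))"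
  by (intro prob_space_PiM N_prob)

lemma prod_sf: "product_sigma_finite (\<lambda>_. UN01)"
  unfolding product_sigma_finite_def using N_prob prob_space_imp_sigma_finite by blast

lemma coord_meas:
  fixes h :: "real \<Rightarrow> real \<Rightarrow> real"
  assumes E: "e \<in> E" "f \<in> E"
    and hm: "(\<lambda>(a,b). h a b) \<in> borel_measurable (borel \<Otimes>\<^sub>M borel)"
  shows "(\<lambda>\<omega>. h (\<omega> e) (\<omega> f)) \<in> borel_measurable (PiM E (\<lambda>_. UN01))"
proof -
  have hm': "(\<lambda>p. h (fst p) (snd p)) \<in> borel_measurable (UN01 \<Otimes>\<^sub>M UN01)"
    using hm by (simp add: split_beta' cong: measurable_cong_sets)
  have "(\<lambda>\<omega>. (\<omega> e, \<omega> f)) \<in> measurable (PiM E (\<lambda>_. UN01)) (UN01 \<Otimes>\<^sub>M UN01)"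
    using E by (intro measurable_Pair measurable_component_singleton) auto
  from measurable_comp[OF this hm'] show ?thesis by (simp add: comp_def)
qed

lemma pair_coord:
  fixes h :: "real \<Rightarrow> real \<Rightarrow> real"
  assumes E: "finite E" "e \<in> E" "f \<in> E" "e \<noteq> f"
    and hm: "(\<lambda>(a,b). h a b) \<in> borel_measurable (borel \<Otimes>\<^sub>M borel)"
    and hb: "\<And>a b. \<bar>h a b\<bar> \<le> 1"
  shows "(\<integral>\<omega>. h (\<omega> e) (\<omega> f) \<partial>PiM E (\<lambda>_. UN01)) = (\<integral>x. (\<integral>y. h x y \<partial>UN01) \<partial>UN01)"
proof -
  interpret product_sigma_finite "\<lambda>_::'a. UN01" by (rule prod_sf)
  interpret N: prob_space UN01 by (rule N_prob)
  interpret NN: pair_sigma_finite UN01 UN01 ..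
  let ?I = "E - {f}"
  have EI: "E = insert f ?I" using E by auto
  have hm': "(\<lambda>p. h (fst p) (snd p)) \<in> borel_measurable (UN01 \<Otimes>\<^sub>M UN01)"
    using hm by (simp add: split_beta' cong: measurable_cong_sets)
  have meas: "(\<lambda>\<omega>. h (\<omega> e) (\<omega> f)) \<in> borel_measurable (PiM E (\<lambda>_. UN01))"
  proof -
    have "(\<lambda>\<omega>. (\<omega> e, \<omega> f)) \<in> measurable (PiM E (\<lambda>_. UN01)) (UN01 \<Otimes>\<^sub>M UN01)"
      using E by (intro measurable_Pair measurable_component_singleton) auto
    from measurable_comp[OF this hm'] show ?thesis by (simp add: comp_def)
  qed
  interpret P: prob_space "PiM E (\<lambda>_. UN01)" by (rule P_prob)
  have int: "integrable (PiM E (\<lambda>_. UN01)) (\<lambda>\<omega>. h (\<omega> e) (\<omega> f))"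
    by (rule P.integrable_const_bound[where B=1]) (use hb meas in auto)
  define G where "G a = (\<integral>y. h a y \<partial>UN01)" for a
  have Gm: "G \<in> borel_measurable UN01"
    unfolding G_def by (rule sigma_finite_measure.borel_measurable_lebesgue_integral[OF prob_space_imp_sigma_finite[OF N_prob]]) (use hm' in \<open>simp add: split_beta'\<close>)
  have "(\<integral>\<omega>. h (\<omega> e) (\<omega> f) \<partial>PiM E (\<lambda>_. UN01))
      = (\<integral>x. (\<integral>y. h ((x(f:=y)) e) ((x(f:=y)) f) \<partial>UN01) \<partial>PiM ?I (\<lambda>_. UN01))"
    using product_integral_insert[of ?I f "\<lambda>\<omega>. h (\<omega> e) (\<omega> f)"] int E EI by simp
  also have "\<dots> = (\<integral>x. G (x e) \<partial>PiM ?I (\<lambda>_. UN01))"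
    using E by (simp add: G_def)
  also have "\<dots> = (\<integral>a. G a \<partial>distr (PiM ?I (\<lambda>_. UN01)) UN01 (\<lambda>x. x e))"
    using E by (subst integral_distr) (auto intro: Gm measurable_component_singleton)
  also have "distr (PiM ?I (\<lambda>_. UN01)) UN01 (\<lambda>x. x e) = UN01"
    using E by (intro distr_PiM_component N_prob) auto
  finally show ?thesis by (simp add: G_def)
qed

lemma hm_le: "(\<lambda>(a::real,b::real). (of_bool (a \<le> b)::real)) \<in> borel_measurable (borel \<Otimes>\<^sub>M borel)"
  by measurable

lemma hm_eq: "(\<lambda>(a::real,b::real). (of_bool (a = b)::real)) \<in> borel_measurable (borel \<Otimes>\<^sub>M borel)"
  by measurable

lemma half:
  assumes E: "finite E" "e \<in> E" "f \<in> E" "e \<noteq> f"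
  shows "(\<integral>\<omega>. of_bool (\<omega> e \<le> \<omega> f) \<partial>PiM E (\<lambda>_. UN01)) = (1/2::real)"
proof -
  interpret P: prob_space "PiM E (\<lambda>_. UN01)" by (rule P_prob)
  define K where "K = (\<integral>x. (\<integral>y. (of_bool (x \<le> y)::real) \<partial>UN01) \<partial>UN01)"
  have p: "(\<integral>\<omega>. of_bool (\<omega> e \<le> \<omega> f) \<partial>PiM E (\<lambda>_. UN01)) = K"
    unfolding K_def by (rule pair_coord[OF E hm_le]) auto
  have q: "(\<integral>\<omega>. of_bool (\<omega> f \<le> \<omega> e) \<partial>PiM E (\<lambda>_. UN01)) = K"
    unfolding K_def by (rule pair_coord[OF E(1,3,2) _ hm_le]) (use E in auto)
  have r: "(\<integral>\<omega>. of_bool (\<omega> e = \<omega> f) \<partial>PiM E (\<lambda>_. UN01)) = (0::real)"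
    by (subst pair_coord[OF E hm_eq]) (auto simp: N_point')
  have i1: "integrable (PiM E (\<lambda>_. UN01)) (\<lambda>\<omega>. (of_bool (\<omega> e \<le> \<omega> f)::real))"
    by (rule P.integrable_const_bound[where B=1]) (use coord_meas[OF E(2,3) hm_le] in auto)
  have i2: "integrable (PiM E (\<lambda>_. UN01)) (\<lambda>\<omega>. (of_bool (\<omega> f \<le> \<omega> e)::real))"
    by (rule P.integrable_const_bound[where B=1]) (use coord_meas[OF E(3,2) hm_le] in auto)
  have i3: "integrable (PiM E (\<lambda>_. UN01)) (\<lambda>\<omega>. (of_bool (\<omega> e = \<omega> f)::real))"
    by (rule P.integrable_const_bound[where B=1]) (use coord_meas[OF E(2,3) hm_eq] in auto)
  have "K + K = (\<integral>\<omega>. of_bool (\<omega> e \<le> \<omega> f) + of_bool (\<omega> f \<le> \<omega> e) \<partial>PiM E (\<lambda>_. UN01))"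
    using p q i1 i2 by (subst Bochner_Integration.integral_add) auto
  also have "\<dots> = (\<integral>\<omega>. 1 + of_bool (\<omega> e = \<omega> f) \<partial>PiM E (\<lambda>_. UN01))"
    by (rule Bochner_Integration.integral_cong) auto
  also have "\<dots> = 1"
    using r i3 P.prob_space by (subst Bochner_Integration.integral_add) auto
  finally show ?thesis using p by simp
qed

lemma AE01:
  assumes "finite E"
  shows "AE \<omega> in PiM E (\<lambda>_. UN01). \<forall>i\<in>E. 0 < \<omega> i \<and> \<omega> i < 1"
proof (rule AE_finite_allI[OF assms])
  fix i assume i: "i \<in> E"
  have "AE x in distr (PiM E (\<lambda>_. UN01)) UN01 (\<lambda>\<omega>. \<omega> i). 0 < x \<and> x < 1"
  proof -
    have "distr (PiM E (\<lambda>_. UN01)) UN01 (\<lambda>\<omega>. \<omega> i) = UN01"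
      using i by (intro distr_PiM_component N_prob) auto
    then show ?thesis using N_AE by (simp only:)
  qed
  then show "AE \<omega> in PiM E (\<lambda>_. UN01). 0 < \<omega> i \<and> \<omega> i < 1"
    by (rule AE_distrD[rotated]) (use i in \<open>auto intro: measurable_component_singleton\<close>)
qed

lemma per_f:
  fixes n :: "'e \<Rightarrow> nat"
  assumes E: "finite E" "e \<in> E" "f \<in> E"
  shows "(\<integral>\<omega>. (of_bool (real (n e) + \<omega> e \<le> real (n f) + \<omega> f)::real) \<partial>PiM E (\<lambda>_. UN01))
     = of_bool (n e < n f) + of_bool (n f = n e) / 2 + of_bool (f = e) / 2"
proof -
  interpret P: prob_space "PiM E (\<lambda>_. UN01)" by (rule P_prob)
  have hm: "(\<lambda>(a::real,b::real). (of_bool (real (n e) + a \<le> real (n f) + b)::real)) \<in> borel_measurable (borel \<Otimes>\<^sub>M borel)"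
    by measurable
  have m: "(\<lambda>\<omega>. (of_bool (real (n e) + \<omega> e \<le> real (n f) + \<omega> f)::real)) \<in> borel_measurable (PiM E (\<lambda>_. UN01))"
    using coord_meas[OF E(2,3) hm] by simp
  have ae: "AE \<omega> in PiM E (\<lambda>_. UN01). 0 < \<omega> e \<and> \<omega> e < 1 \<and> 0 < \<omega> f \<and> \<omega> f < 1"
    using AE01[OF E(1)] by eventually_elim (use E in auto)
  consider "f = e" | "f \<noteq> e" "n e < n f" | "f \<noteq> e" "n f < n e" | "f \<noteq> e" "n f = n e" by linarith
  then show ?thesis
  proof cases
    case 1 then show ?thesis using P.prob_space by simp
  next
    case 2
    have "(\<integral>\<omega>. (of_bool (real (n e) + \<omega> e \<le> real (n f) + \<omega> f)::real) \<partial>PiM E (\<lambda>_. UN01))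
        = (\<integral>\<omega>. 1 \<partial>PiM E (\<lambda>_. UN01))"
    proof (rule integral_cong_AE[OF m])
      show "AE \<omega> in PiM E (\<lambda>_. UN01). (of_bool (real (n e) + \<omega> e \<le> real (n f) + \<omega> f)::real) = 1"
        using ae
      proof eventually_elim
        case (elim \<omega>)
        have "real (n e) + 1 \<le> real (n f)" using 2 by simp
        then show ?case using elim by simp
      qed
    qed simp
    then show ?thesis using 2 P.prob_space by simp
  next
    case 3
    have "(\<integral>\<omega>. (of_bool (real (n e) + \<omega> e \<le> real (n f) + \<omega> f)::real) \<partial>PiM E (\<lambda>_. UN01))
        = (\<integral>\<omega>. 0 \<partial>PiM E (\<lambda>_. UN01))"
    proof (rule integral_cong_AE[OF m])
      show "AE \<omega> in PiM E (\<lambda>_. UN01). (of_bool (real (n e) + \<omega> e \<le> real (n f) + \<omega> f)::real) = 0"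
        using ae
      proof eventually_elim
        case (elim \<omega>)
        have "real (n f) + 1 \<le> real (n e)" using 3 by simp
        then show ?case using elim by simp
      qed
    qed simp
    then show ?thesis using 3 by simp
  next
    case 4
    have "(\<integral>\<omega>. (of_bool (real (n e) + \<omega> e \<le> real (n f) + \<omega> f)::real) \<partial>PiM E (\<lambda>_. UN01))
        = (\<integral>\<omega>. of_bool (\<omega> e \<le> \<omega> f) \<partial>PiM E (\<lambda>_. UN01))"
      using 4 by (intro Bochner_Integration.integral_cong) auto
    also have "\<dots> = 1/2" using 4 E by (intro half) auto
    finally show ?thesis using 4 by simp
  qed
qed

lemma rank_sum: "finite E \<Longrightarrow> rank E x e = (\<Sum>f\<in>E. (of_bool (x e \<le> x f)::real))"
  unfolding rank_def by (simp add: Int_def conj_commute)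

lemma avg_nat: "avg_rank E (\<lambda>f. real (n f)) e =
   real (card {f\<in>E. n e < n f}) + (real (card {f\<in>E. n f = n e}) + 1) / 2"
  unfolding avg_rank_def by simp

lemma rank_meas:
  fixes n :: "'e \<Rightarrow> nat"
  assumes E: "finite E" "e \<in> E"
  shows "(\<lambda>\<omega>. rank E (\<lambda>f. real (n f) + \<omega> f) e) \<in> borel_measurable (PiM E (\<lambda>_. UN01))"
proof -
  have "(\<lambda>\<omega>. (\<Sum>f\<in>E. (of_bool (real (n e) + \<omega> e \<le> real (n f) + \<omega> f)::real))) \<in> borel_measurable (PiM E (\<lambda>_. UN01))"
  proof (rule borel_measurable_sum)
    fix f assume f: "f \<in> E"
    have hm: "(\<lambda>(a::real,b::real). (of_bool (real (n e) + a \<le> real (n f) + b)::real)) \<in> borel_measurable (borel \<Otimes>\<^sub>M borel)"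
      by measurable
    show "(\<lambda>\<omega>. (of_bool (real (n e) + \<omega> e \<le> real (n f) + \<omega> f)::real)) \<in> borel_measurable (PiM E (\<lambda>_. UN01))"
      using coord_meas[OF E(2) f hm] by simp
  qed
  then show ?thesis using E by (simp add: rank_sum)
qed

lemma rank_bound: "finite E \<Longrightarrow> \<bar>rank E x e\<bar> \<le> real (card E)"
  unfolding rank_def by (simp add: card_mono)

lemma singleton_eqI_aux: "e \<in> E \<Longrightarrow> {x. x = e \<and> x \<in> E} = {e}" by auto

lemma rank_exp:
  fixes n :: "'e \<Rightarrow> nat"
  assumes E: "finite E" "e \<in> E"
  shows "(\<integral>\<omega>. rank E (\<lambda>f. real (n f) + \<omega> f) e \<partial>PiM E (\<lambda>_. UN01)) = avg_rank E (\<lambda>f. real (n f)) e"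
proof -
  interpret P: prob_space "PiM E (\<lambda>_. UN01)" by (rule P_prob)
  have "(\<integral>\<omega>. rank E (\<lambda>f. real (n f) + \<omega> f) e \<partial>PiM E (\<lambda>_. UN01))
     = (\<integral>\<omega>. (\<Sum>f\<in>E. (of_bool (real (n e) + \<omega> e \<le> real (n f) + \<omega> f)::real)) \<partial>PiM E (\<lambda>_. UN01))"
    using E by (simp add: rank_sum)
  also have "\<dots> = (\<Sum>f\<in>E. (\<integral>\<omega>. (of_bool (real (n e) + \<omega> e \<le> real (n f) + \<omega> f)::real) \<partial>PiM E (\<lambda>_. UN01)))"
  proof (rule Bochner_Integration.integral_sum)
    fix f assume f: "f \<in> E"
    have hm: "(\<lambda>(a::real,b::real). (of_bool (real (n e) + a \<le> real (n f) + b)::real)) \<in> borel_measurable (borel \<Otimes>\<^sub>M borel)"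
      by measurable
    show "integrable (PiM E (\<lambda>_. UN01)) (\<lambda>\<omega>. (of_bool (real (n e) + \<omega> e \<le> real (n f) + \<omega> f)::real))"
      by (rule P.integrable_const_bound[where B=1]) (use coord_meas[OF E(2) f hm] in auto)
  qed
  also have "\<dots> = (\<Sum>f\<in>E. of_bool (n e < n f) + of_bool (n f = n e) / 2 + of_bool (f = e) / 2)"
    using E by (intro sum.cong refl per_f) auto
  also have "\<dots> = avg_rank E (\<lambda>f. real (n f)) e"
    using E \<open>e \<in> E\<close>[THEN singleton_eqI_aux] unfolding avg_nat
    by (simp add: sum.distrib sum_divide_distrib[symmetric] Int_def conj_commute)
  finally show ?thesis .
qed

lemma prod_int:
  fixes g h :: "'a \<Rightarrow> real"
  assumes A: "prob_space A" and B: "prob_space B"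
    and gm: "g \<in> borel_measurable A" and hm: "h \<in> borel_measurable B"
    and gb: "\<And>x. \<bar>g x\<bar> \<le> C" and hb: "\<And>x. \<bar>h x\<bar> \<le> D"
  shows "(\<integral>\<omega>. g (fst \<omega>) * h (snd \<omega>) \<partial>(A \<Otimes>\<^sub>M B)) = integral\<^sup>L A g * integral\<^sup>L B h"
proof -
  interpret A: prob_space A by (rule A)
  interpret B: prob_space B by (rule B)
  interpret AB: pair_sigma_finite A B ..
  interpret PAB: prob_space "A \<Otimes>\<^sub>M B" by (intro prob_space_pair A B)
  have m: "(\<lambda>\<omega>. g (fst \<omega>) * h (snd \<omega>)) \<in> borel_measurable (A \<Otimes>\<^sub>M B)"
    using gm hm by measurable
  have int: "integrable (A \<Otimes>\<^sub>M B) (\<lambda>\<omega>. g (fst \<omega>) * h (snd \<omega>))"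
  proof (rule PAB.integrable_const_bound[where B="C*D"])
    show "AE x in A \<Otimes>\<^sub>M B. norm (g (fst x) * h (snd x)) \<le> C * D"
      using gb hb by (auto simp: abs_mult intro!: mult_mono order_trans[OF abs_ge_zero gb])
  qed (rule m)
  have "(\<integral>\<omega>. g (fst \<omega>) * h (snd \<omega>) \<partial>(A \<Otimes>\<^sub>M B)) = (\<integral>x. (\<integral>y. g x * h y \<partial>B) \<partial>A)"
    using AB.integral_fst'[OF int] by simp
  also have "\<dots> = (\<integral>x. g x * integral\<^sup>L B h \<partial>A)" by simp
  also have "\<dots> = integral\<^sup>L A g * integral\<^sup>L B h" by simp
  finally show ?thesis .
qed

theorem lemma4p4:
  fixes V :: "'v set" and E :: "'e set" and src tgt :: "'e \<Rightarrow> 'v"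
    and e :: 'e and \<alpha> \<beta> :: dir
  assumes "finite V" and "finite E"
    and "\<forall>f\<in>E. src f \<in> V \<and> tgt f \<in> V"
    and "e \<in> E"
  defines "M \<equiv> unif_family E \<Otimes>\<^sub>M unif_family E"
    and "Ra \<equiv> \<lambda>(U, W). rank E (\<lambda>f. real (deg E src tgt \<alpha> (src f)) + U f) e"
    and "Rb \<equiv> \<lambda>(U, W). rank E (\<lambda>f. real (deg E src tgt \<beta> (tgt f)) + W f) e"
    and "Ra_bar \<equiv> avg_rank E (\<lambda>f. real (deg E src tgt \<alpha> (src f))) e"
    and "Rb_bar \<equiv> avg_rank E (\<lambda>f. real (deg E src tgt \<beta> (tgt f))) e"
  shows "(\<integral>\<omega>. Ra \<omega> \<partial>M) = Ra_bar
    \<and> (\<integral>\<omega>. Rb \<omega> \<partial>M) = Rb_bar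
    \<and> (\<integral>\<omega>. Ra \<omega> * Rb \<omega> \<partial>M) = Ra_bar * Rb_bar"
proof -
  let ?P = "PiM E (\<lambda>_. UN01)"
  have MP: "M = ?P \<Otimes>\<^sub>M ?P" unfolding M_def unif_family_def ..
  define gA where "gA U = rank E (\<lambda>f. real (deg E src tgt \<alpha> (src f)) + U f) e" for U
  define gB where "gB W = rank E (\<lambda>f. real (deg E src tgt \<beta> (tgt f)) + W f) e" for W
  have fin: "finite E" "e \<in> E" using assms by auto
  have gAm: "gA \<in> borel_measurable ?P" unfolding gA_def by (rule rank_meas[OF fin])
  have gBm: "gB \<in> borel_measurable ?P" unfolding gB_def by (rule rank_meas[OF fin])
  have gAb: "\<bar>gA x\<bar> \<le> real (card E)" for x unfolding gA_def by (rule rank_bound[OF fin(1)])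
  have gBb: "\<bar>gB x\<bar> \<le> real (card E)" for x unfolding gB_def by (rule rank_bound[OF fin(1)])
  have one_b: "\<bar>(\<lambda>_. 1::real) x\<bar> \<le> 1" for x :: "'e \<Rightarrow> real" by simp
  have eA: "integral\<^sup>L ?P gA = Ra_bar" unfolding gA_def Ra_bar_def by (rule rank_exp[OF fin])
  have eB: "integral\<^sup>L ?P gB = Rb_bar" unfolding gB_def Rb_bar_def by (rule rank_exp[OF fin])
  have Ra': "Ra = (\<lambda>\<omega>. gA (fst \<omega>) * (\<lambda>_. 1) (snd \<omega>))" unfolding Ra_def gA_def by (auto simp: fun_eq_iff)
  have Rb': "Rb = (\<lambda>\<omega>. (\<lambda>_. 1) (fst \<omega>) * gB (snd \<omega>))" unfolding Rb_def gB_def by (auto simp: fun_eq_iff)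
  have RR: "(\<lambda>\<omega>. Ra \<omega> * Rb \<omega>) = (\<lambda>\<omega>. gA (fst \<omega>) * gB (snd \<omega>))"
    unfolding Ra_def Rb_def gA_def gB_def by (auto simp: fun_eq_iff)
  have pp: "prob_space ?P" by (rule P_prob)
  interpret PP: prob_space ?P by (rule pp)
  have 1: "(\<integral>\<omega>. Ra \<omega> \<partial>M) = Ra_bar"
    unfolding MP Ra' by (subst prod_int[OF pp pp gAm _ gAb one_b]) (auto simp: eA PP.prob_space)
  have 2: "(\<integral>\<omega>. Rb \<omega> \<partial>M) = Rb_bar"
    unfolding MP Rb' by (subst prod_int[OF pp pp _ gBm one_b gBb]) (auto simp: eB PP.prob_space)
  have 3: "(\<integral>\<omega>. Ra \<omega> * Rb \<omega> \<partial>M) = Ra_bar * Rb_bar"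
    unfolding MP RR by (subst prod_int[OF pp pp gAm gBm gAb gBb]) (auto simp: eA eB)
  show ?thesis using 1 2 3 by blast
qed

end
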